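(* Let $\bar a>0$, $X=[0,\bar a]$, and let $f:\mathbb{R}_{\ge0}\to\mathbb{R}_{\ge0}$ satisfy: (i) $f$ is $L$-Lipschitz; (ii) the restriction of $f$ to $X$ is strictly concave; (iii) $f(x)=0$ for all $x\ge\bar a$. Let $0<\alpha\le\frac{1}{L+1}$ and $g(x)=\alpha f(x)+(1-\alpha)x$. Then $g$ restricted to $X$ satisfies: $g$ maps $X$ into $X$; $g$ is strictly concave and Lipschitz continuous on $X$; $g(x)\ge0$ for all $x\in X$; with $\bar x$ the maximizer of $g$ on $X$, the restriction of $g$ to $[\bar x,\bar a]$ is Lipschitz with some constant strictly less than $1$; and there is a positive $b\in X$ with $g(b)<b$. Moreover, for every $x_0>0$, the fixed-point iteration $x_{k+1}=g(x_k)$ converges to a fixed point of $f$.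
   Context: A function $f$ is $L$-Lipschitz if $|f(x)-f(y)|\le L|x-y|$ for all $x,y$; Lipschitz continuous if $L$-Lipschitz for some $L>0$. $f$ is strictly concave on an interval if $f((1-\lambda)x+\lambda y)>(1-\lambda)f(x)+\lambda f(y)$ for all $x\ne y$ in it and $0<\lambda<1$. *)

theory Defs
  imports "HOL-Analysis.Analysis"
begin

definition strictly_concave_on :: "real set \<Rightarrow> (real \<Rightarrow> real) \<Rightarrow> bool" where
  "strictly_concave_on S f \<longleftrightarrow>
     (\<forall>x\<in>S. \<forall>y\<in>S. \<forall>t::real. x \<noteq> y \<and> 0 < t \<and> t < 1 \<longrightarrow>
        f ((1 - t) * x + t * y) > (1 - t) * f x + t * f y)"

end

theory Submission
  imports Defs
begin

theorem mainTheorem9: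
  fixes f g :: "real \<Rightarrow> real" and abar L \<alpha> :: real
  assumes abar_pos: "abar > 0"
    and f_nonneg: "\<forall>x\<ge>0. f x \<ge> 0"
    and f_lip: "L-lipschitz_on {0..} f"
    and f_conc: "strictly_concave_on {0..abar} f"
    and f_zero: "\<forall>x\<ge>abar. f x = 0"
    and alpha_pos: "0 < \<alpha>" and alpha_le: "\<alpha> \<le> 1 / (L + 1)"
    and g_def: "\<forall>x. g x = \<alpha> * f x + (1 - \<alpha>) * x"
  shows "g ` {0..abar} \<subseteq> {0..abar}
    \<and> strictly_concave_on {0..abar} g
    \<and> (\<exists>K>0. K-lipschitz_on {0..abar} g)
    \<and> (\<forall>x\<in>{0..abar}. g x \<ge> 0)
    \<and> (\<exists>!xbar. xbar \<in> {0..abar} \<and> (\<forall>x\<in>{0..abar}. g x \<le> g xbar))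
    \<and> (\<forall>xbar\<in>{0..abar}. (\<forall>x\<in>{0..abar}. g x \<le> g xbar) \<longrightarrow>
          (\<exists>K. 0 < K \<and> K < 1 \<and> K-lipschitz_on {xbar..abar} g))
    \<and> (\<exists>b\<in>{0..abar}. b > 0 \<and> g b < b)
    \<and> (\<forall>x0 > 0. \<forall>xs :: nat \<Rightarrow> real. xs 0 = x0 \<and> (\<forall>k. xs (Suc k) = g (xs k)) \<longrightarrow>
          (\<exists>p\<ge>0. f p = p \<and> xs \<longlonglongrightarrow> p))"
proof -
  have L0: "L \<ge> 0" using f_lip by (simp add: lipschitz_on_def)
  have aL: "\<alpha> * (L + 1) \<le> 1" using alpha_le L0 by (simp add: field_simps)
  have a1: "\<alpha> \<le> 1" proof -
    have "\<alpha> * L \<ge> 0" using L0 alpha_pos by simp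
    thus ?thesis using aL by (simp add: algebra_simps)
  qed
  have fd: "\<bar>f x - f y\<bar> \<le> L * \<bar>x - y\<bar>" if "x \<ge> 0" "y \<ge> 0" for x y
    using lipschitz_onD[OF f_lip, of x y] that by (simp add: dist_real_def)
  have gmono: "g x \<le> g y" if "0 \<le> x" "x \<le> y" for x y
  proof -
    have "f x - f y \<le> L * (y - x)" using fd[of x y] that by auto
    hence "\<alpha> * (f x - f y) \<le> \<alpha> * L * (y - x)" using alpha_pos
      by (metis mult.assoc mult_left_mono less_imp_le)
    moreover have "\<alpha> * L * (y - x) \<le> (1 - \<alpha>) * (y - x)"
      using aL that by (intro mult_right_mono) (auto simp: algebra_simps)
    ultimately show ?thesis using g_def[rule_format, of x] g_def[rule_format, of y] by (simp add: algebra_simps)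
  qed
  have gnn: "g x \<ge> 0" if "x \<ge> 0" for x
    using f_nonneg that g_def alpha_pos a1 by (simp add: add_nonneg_nonneg)
  have gab: "g abar = (1 - \<alpha>) * abar" using g_def f_zero by simp
  have gle: "g x \<le> x" if "x \<ge> abar" for x
    using g_def[rule_format, of x] f_zero that alpha_pos abar_pos by simp
  have g_lip: "(\<alpha> * L + 1)-lipschitz_on {0..} g"
  proof (rule lipschitz_onI)
    fix x y :: real assume "x \<in> {0..}" "y \<in> {0..}"
    hence h: "\<bar>f x - f y\<bar> \<le> L * \<bar>x - y\<bar>" using fd by auto
    have "\<bar>g x - g y\<bar> = \<bar>\<alpha> * (f x - f y) + (1 - \<alpha>) * (x - y)\<bar>" unfolding g_def[rule_format] by (simp add: algebra_simps)
    also have "\<dots> \<le> \<alpha> * \<bar>f x - f y\<bar> + (1 - \<alpha>) * \<bar>x - y\<bar>"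
      using alpha_pos a1 abs_triangle_ineq[of "\<alpha> * (f x - f y)" "(1 - \<alpha>) * (x - y)"] by (simp add: abs_mult)
    also have "\<dots> \<le> \<alpha> * (L * \<bar>x - y\<bar>) + 1 * \<bar>x - y\<bar>"
      using h alpha_pos by (intro add_mono mult_left_mono mult_right_mono) auto
    finally show "dist (g x) (g y) \<le> (\<alpha> * L + 1) * dist x y" by (simp add: dist_real_def algebra_simps)
  next
    show "0 \<le> \<alpha> * L + 1" using alpha_pos L0 by simp
  qed
  have gcont: "continuous_on {0..} g" using lipschitz_on_continuous_on[OF g_lip] .
  have P1: "g ` {0..abar} \<subseteq> {0..abar}"
  proof
    fix y assume "y \<in> g ` {0..abar}"
    then obtain x where x: "x \<in> {0..abar}" "y = g x" by auto
    have "g x \<le> g abar" using gmono x by auto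
    also have "\<dots> \<le> abar" using gle abar_pos by auto
    finally show "y \<in> {0..abar}" using gnn x by auto
  qed
  have P2: "strictly_concave_on {0..abar} g"
    unfolding strictly_concave_on_def
  proof (intro ballI allI impI)
    fix x y t :: real assume xy: "x \<in> {0..abar}" "y \<in> {0..abar}" and h: "x \<noteq> y \<and> 0 < t \<and> t < 1"
    have "f ((1 - t) * x + t * y) > (1 - t) * f x + t * f y"
      using f_conc xy h unfolding strictly_concave_on_def by blast
    hence "\<alpha> * f ((1 - t) * x + t * y) > \<alpha> * ((1 - t) * f x + t * f y)"
      using alpha_pos by simp
    thus "g ((1 - t) * x + t * y) > (1 - t) * g x + t * g y"
      unfolding g_def[rule_format] by (simp add: algebra_simps)
  qed
  have P3: "\<exists>K>0. K-lipschitz_on {0..abar} g"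
  proof (intro exI[of _ "\<alpha> * L + 1"] conjI)
    show "0 < \<alpha> * L + 1" using alpha_pos L0 mult_nonneg_nonneg[of \<alpha> L] by linarith
    show "(\<alpha> * L + 1)-lipschitz_on {0..abar} g" using g_lip by (rule lipschitz_on_subset) auto
  qed
  have P5: "\<exists>!xbar. xbar \<in> {0..abar} \<and> (\<forall>x\<in>{0..abar}. g x \<le> g xbar)"
  proof (rule ex_ex1I)
    show "\<exists>xbar. xbar \<in> {0..abar} \<and> (\<forall>x\<in>{0..abar}. g x \<le> g xbar)"
      using gmono abar_pos by (intro exI[of _ abar]) auto
  next
    fix x y assume x: "x \<in> {0..abar} \<and> (\<forall>z\<in>{0..abar}. g z \<le> g x)"
      and y: "y \<in> {0..abar} \<and> (\<forall>z\<in>{0..abar}. g z \<le> g y)"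
    show "x = y"
    proof (rule ccontr)
      assume "x \<noteq> y"
      moreover have "0 < (1/2::real)" "(1/2::real) < 1" by auto
      ultimately have "g ((1 - 1/2) * x + 1/2 * y) > (1 - 1/2) * g x + 1/2 * g y"
        using P2 x y unfolding strictly_concave_on_def by blast
      moreover have "(1 - 1/2) * x + 1/2 * y \<in> {0..abar}" using x y by auto
      ultimately have "g ((1 - 1/2) * x + 1/2 * y) \<le> g x" "g ((1 - 1/2) * x + 1/2 * y) > (1 - 1/2) * g x + 1/2 * g y" "g x \<le> g y" "g y \<le> g x"
        using x y by auto
      thus False by simp
    qed
  qed
  have P6: "\<forall>xbar\<in>{0..abar}. (\<forall>x\<in>{0..abar}. g x \<le> g xbar) \<longrightarrow>
          (\<exists>K. 0 < K \<and> K < 1 \<and> K-lipschitz_on {xbar..abar} g)"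
  proof (intro ballI impI exI[of _ "1/2"] conjI)
    fix xbar assume xb: "xbar \<in> {0..abar}" and mx: "\<forall>x\<in>{0..abar}. g x \<le> g xbar"
    have c: "g x = g xbar" if "x \<in> {xbar..abar}" for x
    proof -
      have h1: "x \<in> {0..abar}" "0 \<le> xbar" "xbar \<le> x" using that xb by auto
      have "g x \<le> g xbar" using mx h1(1) by blast
      moreover have "g xbar \<le> g x" using h1(2,3) by (rule gmono)
      ultimately show ?thesis by linarith
    qed
    show "(1/2)-lipschitz_on {xbar..abar} g"
    proof (rule lipschitz_onI)
      fix x y assume "x \<in> {xbar..abar}" "y \<in> {xbar..abar}"
      hence "g x = g y" using c by metis
      thus "dist (g x) (g y) \<le> 1 / 2 * dist x y" by simp
    qed simp
  qed auto
  have P7: "\<exists>b\<in>{0..abar}. b > 0 \<and> g b < b"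
    using gab abar_pos alpha_pos by (intro bexI[of _ abar]) auto
  have P8: "\<forall>x0 > 0. \<forall>xs :: nat \<Rightarrow> real. xs 0 = x0 \<and> (\<forall>k. xs (Suc k) = g (xs k)) \<longrightarrow>
          (\<exists>p\<ge>0. f p = p \<and> xs \<longlonglongrightarrow> p)"
  proof (intro allI impI)
    fix x0 :: real and xs :: "nat \<Rightarrow> real"
    assume x0: "x0 > 0" and h: "xs 0 = x0 \<and> (\<forall>k. xs (Suc k) = g (xs k))"
    have nn: "xs k \<ge> 0" for k
      by (induction k) (use x0 h gnn in auto)
    have ub: "xs k \<le> max x0 abar" for k
    proof (induction k)
      case 0 then show ?case using h by simp
    next
      case (Suc k)
      have "g (xs k) \<le> g (max x0 abar)" using gmono[OF nn[of k] Suc] .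
      also have "\<dots> \<le> max x0 abar" by (rule gle) simp
      finally show ?case using h by simp
    qed
    have mono: "monoseq xs"
    proof (cases "xs 0 \<le> xs 1")
      case True
      have "xs k \<le> xs (Suc k)" for k
      proof (induction k)
        case 0 thus ?case using True by simp
      next
        case (Suc k) thus ?case using h gmono[OF nn[of k] Suc] by simp
      qed
      thus ?thesis unfolding monoseq_Suc by blast
    next
      case False
      have "xs (Suc k) \<le> xs k" for k
      proof (induction k)
        case 0 thus ?case using False by simp
      next
        case (Suc k) thus ?case using h gmono[OF nn[of "Suc k"] Suc] by simp
      qed
      thus ?thesis unfolding monoseq_Suc by blast
    qed
    have "Bseq xs" using nn ub
      by (intro BseqI'[of _ "max x0 abar"]) (simp add: abs_le_iff)
    then have "convergent xs" using Bseq_monoseq_convergent mono by blast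
    then obtain p where p: "xs \<longlonglongrightarrow> p" by (auto simp: convergent_def)
    have p0: "p \<ge> 0" using p nn by (intro LIMSEQ_le_const) auto
    have "(\<lambda>k. g (xs k)) \<longlonglongrightarrow> g p"
      using continuous_on_tendsto_compose[OF gcont p] p0 nn by auto
    moreover have "(\<lambda>k. g (xs k)) \<longlonglongrightarrow> p"
      using LIMSEQ_Suc[OF p] h by simp
    ultimately have "g p = p" using LIMSEQ_unique by blast
    hence "\<alpha> * f p = \<alpha> * p" using g_def[rule_format, of p] by (simp add: algebra_simps)
    hence "f p = p" using alpha_pos by simp
    thus "\<exists>p\<ge>0. f p = p \<and> xs \<longlonglongrightarrow> p" using p p0 by blast
  qed
  show ?thesis using P1 P2 P3 gnn P5 P6 P7 P8 by auto
qed

end
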